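(* Let $p\ge3$ be an integer, $\eta>0$, and $Y\sim\chi^2_p(\eta)$. Let $\psi:(0,\infty)\to\mathbb{R}$ be measurable and suppose there is $d\in(0,\infty)$ with $|\psi(y)|\le d/y$ for all $y>0$. Then $|E[\psi(Y)\mid\eta]|\le 2d/\eta$; in particular $E[\psi(Y)\mid\eta]=O(\eta^{-1})$ as $\eta\to\infty$.
   Context: $\chi^2_p(\eta)$ denotes the noncentral chi-square distribution with $p$ degrees of freedom and noncentrality $\eta$, i.e. the law of $\|Z\|^2$ where $Z\sim N_p(\gamma,I_p)$ and $\|\gamma\|^2=\eta$; its density at $v>0$ is $\sum_{n=0}^\infty\frac{e^{-\eta/2}(\eta/2)^n}{n!}\frac{(v/2)^{n+p/2-1}e^{-v/2}}{2\Gamma(n+p/2)}$. *)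

theory Defs
  imports "HOL-Analysis.Analysis" "HOL-Library.Landau_Symbols"
begin

definition nc_chisq_density :: "nat \<Rightarrow> real \<Rightarrow> real \<Rightarrow> real" where
  "nc_chisq_density p eta v =
     (if v > 0 then
        (\<Sum>n. exp (- eta / 2) * (eta / 2) ^ n / fact n *
             ((v / 2) powr (real n + real p / 2 - 1) * exp (- v / 2)
              / (2 * Gamma (real n + real p / 2))))
      else 0)"

definition nc_chisq_expect :: "nat \<Rightarrow> real \<Rightarrow> (real \<Rightarrow> real) \<Rightarrow> real" where
  "nc_chisq_expect p eta psi =
     (LINT v:{0<..}|lborel. nc_chisq_density p eta v * psi v)"

end

theory Submission
  imports Defs
begin


lemma term_integral:
  fixes k C :: real
  assumes k: "k > 1" and C: "C \<ge> 0"
  shows "(\<integral>\<^sup>+v. ennreal (indicator {0<..} v * (C * ((v/2) powr (k - 1) * exp (- v/2) / (2 * Gamma k)) * (1 / v))) \<partial>lborel)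
        = ennreal (C / (2 * (k - 1)))"
  (is "?L = _")
proof -
  let ?f = "\<lambda>v. ennreal (indicator {0<..} v * (C * ((v/2) powr (k - 1) * exp (- v/2) / (2 * Gamma k)) * (1 / v)))"
  have G: "Gamma k > 0" using k by auto
  have "?L = ennreal \<bar>2\<bar> * (\<integral>\<^sup>+u. ?f (0 + 2 * u) \<partial>lborel)"
    by (rule nn_integral_real_affine) auto
  also have "(\<lambda>u. ?f (0 + 2 * u)) = (\<lambda>u. ennreal (C / (4 * Gamma k)) * ennreal (indicator {0..} u * u powr ((k - 1) - 1) / exp u))"
  proof
    fix u :: real
    have "?f (0 + 2 * u) = ennreal (C / (4 * Gamma k) * (indicator {0..} u * u powr ((k - 1) - 1) / exp u))"
    proof (cases "u > 0")
      case True
      have e: "u powr ((k - 1) - 1) = u powr (k - 1) / u" using powr_diff[of u "k-1" 1] True by simp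
      show ?thesis unfolding e using True
        by (simp add: exp_minus field_simps)
    next
      case False
      then show ?thesis by (cases "u = 0") (auto simp: indicator_def)
    qed
    also have "\<dots> = ennreal (C / (4 * Gamma k)) * ennreal (indicator {0..} u * u powr ((k - 1) - 1) / exp u)"
      using C G by (intro ennreal_mult) auto
    finally show "?f (0 + 2 * u) = \<dots>" .
  qed
  also have "(\<integral>\<^sup>+u. ennreal (C / (4 * Gamma k)) * ennreal (indicator {0..} u * u powr ((k - 1) - 1) / exp u) \<partial>lborel)
     = ennreal (C / (4 * Gamma k)) * Gamma (k - 1)"
    using k by (subst nn_integral_cmult) (auto simp: Gamma_conv_nn_integral_real)
  finally have L: "?L = ennreal 2 * (ennreal (C / (4 * Gamma k)) * ennreal (Gamma (k - 1)))" by simp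
  have gk: "Gamma k = (k - 1) * Gamma (k - 1)"
    using Gamma_plus1[of "k - 1"] k nonpos_Ints_nonpos[of "k - 1"] by force
  have G1: "Gamma (k - 1) > 0" using k by auto
  have a: "C / (4 * Gamma k) \<ge> 0" using k C G1 gk by auto
  have "ennreal (C / (4 * Gamma k)) * ennreal (Gamma (k - 1)) = ennreal (C / (4 * Gamma k) * Gamma (k - 1))"
    by (rule ennreal_mult[symmetric]) (use a G1 in auto)
  also have "C / (4 * Gamma k) * Gamma (k - 1) = C / (4 * (k - 1))"
  proof -
    have "Gamma (k - 1) \<noteq> 0" "k - 1 \<noteq> 0" using G1 k by linarith+
    then show ?thesis unfolding gk by (simp add: field_simps)
  qed
  finally have L2: "?L = ennreal 2 * ennreal (C / (4 * (k - 1)))" using L by simp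
  also have "\<dots> = ennreal (2 * (C / (4 * (k - 1))))"
    by (rule ennreal_mult[symmetric]) (use k C in auto)
  also have "2 * (C / (4 * (k - 1))) = C / (2 * (k - 1))" using k by (simp add: field_simps)
  finally show ?thesis .
qed


lemma summ_aux:
  fixes l x a :: real
  assumes l: "l \<ge> 0" and x: "x > 0" and a: "a \<ge> 1"
  shows "summable (\<lambda>n. exp (-l) * l ^ n / fact n * (x powr (real n + a - 1) * exp (-x) / (2 * Gamma (real n + a))))"
    (is "summable ?f")
proof (rule summable_ratio_test[where c = "1/2" and N = "nat \<lceil>2 * l * x\<rceil>"])
  fix n assume n: "n \<ge> nat \<lceil>2 * l * x\<rceil>"
  have G: "Gamma (real n + a) > 0" using a by auto
  have gs: "Gamma (real (Suc n) + a) = (real n + a) * Gamma (real n + a)"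
    using Gamma_plus1[of "real n + a"] a nonpos_Ints_nonpos[of "real n + a"] by (force simp: add_ac)
  have ps: "x powr (real (Suc n) + a - 1) = x powr (real n + a - 1) * x"
    using x powr_add[of x "real n + a - 1" 1] by (simp add: add_ac)
  have eq: "?f (Suc n) = ?f n * (l * x / ((real n + 1) * (real n + a)))"
    unfolding gs ps using G a by (simp add: divide_simps)
  have f0: "?f n \<ge> 0" using G l x by auto
  have "2 * l * x \<le> real n" using n by linarith
  moreover have D: "(real n + 1) * (real n + a) \<ge> real n + 1"
    using mult_left_mono[of 1 "real n + a" "real n + 1"] a by simp
  ultimately have r: "l * x / ((real n + 1) * (real n + a)) \<le> 1/2"
  proof -
    have h: "y / D \<le> 1/2" if "D > 0" "2 * y \<le> D" for y D :: real
      using that by (simp add: pos_divide_le_eq)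
    show ?thesis by (rule h) (use D \<open>2 * l * x \<le> real n\<close> in linarith)+
  qed
  have r0: "l * x / ((real n + 1) * (real n + a)) \<ge> 0" using a l x by auto
  show "norm (?f (Suc n)) \<le> 1/2 * norm (?f n)"
  proof -
    have h2: "norm (F * R) \<le> 1/2 * norm F" if "F \<ge> 0" "R \<ge> 0" "R \<le> 1/2" for F R :: real
      using that mult_left_mono[of R "1/2" F] by (simp add: abs_mult mult.commute)
    show ?thesis unfolding eq by (rule h2) (fact f0 r0 r)+
  qed
qed simp


lemma main_bound:
  fixes p :: nat and eta d :: real and psi :: "real \<Rightarrow> real"
  assumes p: "p \<ge> 3" and eta: "eta > 0" and d: "d > 0"
    and b: "\<And>y. y > 0 \<Longrightarrow> \<bar>psi y\<bar> \<le> d / y"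
  shows "\<bar>nc_chisq_expect p eta psi\<bar> \<le> 2 * d / eta"
proof -
  define l where "l = eta / 2"
  define c where "c n = exp (- eta / 2) * (eta / 2) ^ n / fact n" for n :: nat
  define X where "X n v = (v / 2) powr (real n + real p / 2 - 1) * exp (- v / 2) / (2 * Gamma (real n + real p / 2))" for n :: nat and v :: real
  define T where "T n v = c n * X n v" for n v
  define F where "F n v = ennreal (indicator {0<..} v * ((d * c n) * X n v) * (1 / v))" for n v
  define P where "P m = exp (- l) * l ^ m / fact m" for m :: nat
  have l: "l > 0" using eta by (simp add: l_def)
  have G: "Gamma (real n + real p / 2) > 0" for n using p by auto
  have c0: "c n \<ge> 0" for n using eta by (simp add: c_def)
  have X0: "X n v \<ge> 0" for n v using G[of n] by (simp add: X_def)
  have T0: "T n v \<ge> 0" for n v using c0 X0 by (simp add: T_def)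
  have dens: "nc_chisq_density p eta v = (\<Sum>n. T n v)" if "v > 0" for v
    using that unfolding nc_chisq_density_def T_def c_def X_def by simp
  have summ: "summable (\<lambda>n. T n v)" if v: "v > 0" for v
  proof -
    have "summable (\<lambda>n. exp (-l) * l ^ n / fact n * ((v/2) powr (real n + real p / 2 - 1) * exp (-(v/2)) / (2 * Gamma (real n + real p / 2))))"
      by (rule summ_aux) (use l v p in auto)
    then show ?thesis by (simp add: T_def c_def X_def l_def)
  qed
  have pw: "ennreal (norm (indicator {0<..} v *\<^sub>R (nc_chisq_density p eta v * psi v))) \<le> (\<Sum>n. F n v)" for v
  proof (cases "v > 0")
    case True
    have "norm (indicator {0<..} v *\<^sub>R (nc_chisq_density p eta v * psi v)) = (\<Sum>n. T n v) * \<bar>psi v\<bar>"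
      using True suminf_nonneg[OF summ[OF True] T0] by (simp add: dens abs_mult)
    also have "\<dots> \<le> (\<Sum>n. T n v) * (d / v)"
      by (rule mult_left_mono[OF b[OF True]]) (rule suminf_nonneg[OF summ[OF True] T0])
    also have "\<dots> = (\<Sum>n. T n v * (d / v))"
      by (rule suminf_mult2) (rule summ[OF True])
    finally have 1: "ennreal (norm (indicator {0<..} v *\<^sub>R (nc_chisq_density p eta v * psi v))) \<le> ennreal (\<Sum>n. T n v * (d / v))"
      by (rule ennreal_leI)
    also have "\<dots> = (\<Sum>n. ennreal (T n v * (d / v)))"
      by (rule suminf_ennreal2[symmetric]) (use T0 True d summ[OF True] in \<open>auto intro: summable_mult2\<close>)
    also have "\<dots> = (\<Sum>n. F n v)"
      using True by (simp add: F_def T_def mult_ac)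
    finally show ?thesis .
  next
    case False
    then show ?thesis by simp
  qed
  have meas: "F n \<in> borel_measurable lborel" for n
    unfolding F_def X_def by measurable
  have int_le: "(\<integral>\<^sup>+v. ennreal (norm (indicator {0<..} v *\<^sub>R (nc_chisq_density p eta v * psi v))) \<partial>lborel) \<le> ennreal (2 * d / eta)"
  proof -
    have "(\<integral>\<^sup>+v. ennreal (norm (indicator {0<..} v *\<^sub>R (nc_chisq_density p eta v * psi v))) \<partial>lborel) \<le> (\<integral>\<^sup>+v. (\<Sum>n. F n v) \<partial>lborel)"
      by (rule nn_integral_mono) (rule pw)
    also have "\<dots> = (\<Sum>n. integral\<^sup>N lborel (F n))"
      by (rule nn_integral_suminf) (rule meas)
    also have "\<dots> = (\<Sum>n. ennreal (d * c n / (2 * ((real n + real p / 2) - 1))))"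
    proof (rule suminf_cong)
      fix n
      show "integral\<^sup>N lborel (F n) = ennreal (d * c n / (2 * ((real n + real p / 2) - 1)))"
        unfolding F_def X_def using term_integral[of "real n + real p / 2" "d * c n"] p d c0[of n] by simp
    qed
    also have "\<dots> \<le> (\<Sum>n. ennreal (d / l * P (Suc n)))"
    proof (rule suminf_le)
      fix n
      have cP: "c n = P n" by (simp add: c_def P_def l_def)
      have PS: "P (Suc n) = P n * l / (real n + 1)" using l by (simp add: P_def field_simps)
      have P0: "P n \<ge> 0" using l by (simp add: P_def)
      have "d * c n / (2 * ((real n + real p / 2) - 1)) \<le> d * P n / (real n + 1)"
        unfolding cP using p d P0 by (intro divide_left_mono mult_nonneg_nonneg) auto
      also have "\<dots> = d / l * P (Suc n)" unfolding PS using l by (simp add: field_simps)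
      finally show "ennreal (d * c n / (2 * ((real n + real p / 2) - 1))) \<le> ennreal (d / l * P (Suc n))"
        by (rule ennreal_leI)
    qed auto
    also have "\<dots> = ennreal (d / l * (1 - P 0))"
    proof (rule suminf_ennreal_eq)
      show "0 \<le> d / l * P (Suc n)" for n using d l by (simp add: P_def)
      have "(\<lambda>n. exp (- l) * (l ^ n /\<^sub>R fact n)) sums (exp (- l) * exp l)"
        by (rule sums_mult) (rule exp_converges)
      moreover have "(\<lambda>n. exp (- l) * (l ^ n /\<^sub>R fact n)) = P"
        by (rule ext) (simp add: P_def divide_inverse mult_ac)
      ultimately have "P sums 1" by (simp add: exp_minus)
      then have "(\<lambda>n. P (Suc n)) sums (1 - P 0)" by (simp add: sums_Suc_iff)
      then show "(\<lambda>n. d / l * P (Suc n)) sums (d / l * (1 - P 0))" by (rule sums_mult)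
    qed
    also have "\<dots> \<le> ennreal (2 * d / eta)"
      using d l by (intro ennreal_leI) (simp add: P_def l_def field_simps)
    finally show ?thesis .
  qed
  show ?thesis
  proof (cases "integrable lborel (\<lambda>v. indicator {0<..} v *\<^sub>R (nc_chisq_density p eta v * psi v))")
    case True
    have "ennreal \<bar>nc_chisq_expect p eta psi\<bar> \<le> ennreal (2 * d / eta)"
      using order_trans[OF integral_norm_bound_ennreal[OF True] int_le]
      unfolding nc_chisq_expect_def set_lebesgue_integral_def by simp
    then show ?thesis using d eta by (simp add: ennreal_le_iff)
  next
    case False
    then show ?thesis using d eta
      by (simp add: nc_chisq_expect_def set_lebesgue_integral_def not_integrable_integral_eq)
  qed
qed

theorem propositionA8:
  fixes p :: nat and eta d :: real and psi :: "real \<Rightarrow> real"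
  assumes "p \<ge> 3"
    and "eta > 0"
    and "psi \<in> borel_measurable (restrict_space borel {0<..})"
    and "d > 0"
    and "\<And>y. y > 0 \<Longrightarrow> \<bar>psi y\<bar> \<le> d / y"
  shows "\<bar>nc_chisq_expect p eta psi\<bar> \<le> 2 * d / eta \<and>
         (\<lambda>e. nc_chisq_expect p e psi) \<in> O[at_top](\<lambda>e. 1 / e)"
proof
  show "\<bar>nc_chisq_expect p eta psi\<bar> \<le> 2 * d / eta"
    by (rule main_bound) (use assms in auto)
  show "(\<lambda>e. nc_chisq_expect p e psi) \<in> O[at_top](\<lambda>e. 1 / e)"
  proof (rule bigoI[where c = "2 * d"])
    show "\<forall>\<^sub>F e in at_top. norm (nc_chisq_expect p e psi) \<le> 2 * d * norm (1 / e)"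
      using eventually_gt_at_top[of "0::real"]
    proof eventually_elim
      case (elim e)
      have "\<bar>nc_chisq_expect p e psi\<bar> \<le> 2 * d / e"
        by (rule main_bound) (use assms elim in auto)
      then show ?case using elim by simp
    qed
  qed
qed

end
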